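(* Let $\mathcal{S}$ be a finite skew translation generalized quadrangle of order $s$ with $s$ even, with elation group $G$ (of order $s^3$) and associated $4$-gonal family $(G,\{A_i\}_{i=0}^s,\{A_i^*\}_{i=0}^s)$, and let $U_0:=\bigcap_{i=0}^s A_i^*$. For $g\in G$ define \[\chi_S(g)=\frac{1}{2s^2}\sum_{i=0}^s\Big(|C_G(g)|(s|A_i\cap g^G|+|A_i^*\cap g^G|)-|G/G'|(s|A_i\cap gG'|+|A_i^*\cap gG'|)\Big),\] \[\chi_T(g)=\frac{1}{2s^2}\sum_{i=0}^s\Big(|C_G(g)|(s|A_i\cap g^G|-|A_i^*\cap g^G|)-|G/G'|(s|A_i\cap gG'|-|A_i^*\cap gG'|)\Big).\] Then $\chi_S$ and $\chi_T$ coincide on $U_0$, and for $g\in U_0$, \[\chi_S(g)=\begin{cases}0,& g\in U_0\setminus G',\\ -\frac{s+1}{2s}|G/G'|,& g\in G'\setminus\{1\},\\ \frac{s+1}{2s}(s^3-|G/G'|),& g=1.\end{cases}\]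
   Context: A generalized quadrangle of order $s$: each line has $s+1$ points, each point is on $s+1$ lines, and for each non-incident point-line pair $(P,\ell)$ there is a unique point on $\ell$ collinear with $P$. An elation about $P$ is an automorphism that is the identity or fixes each line through $P$ and no point not collinear with $P$; a symmetry about $P$ is an elation about $P$ fixing every point collinear with $P$. $\mathcal{S}$ is an elation generalized quadrangle with base point $P$ and elation group $G$ if $G$ consists of elations about $P$ and acts regularly on the points not collinear with $P$; it is a skew translation generalized quadrangle if $G$ contains a subgroup of $s$ symmetries about $P$. The associated $4$-gonal family: fix a point $y$ not collinear with $P$, let $M_0,\dots,M_s$ be the lines through $y$, let $z_i$ be the unique point of $M_i$ collinear with $P$, and let $A_i$, $A_i^*$ be the stabilizers in $G$ of $M_i$ and $z_i$ respectively. $g^G$ is the conjugacy class, $C_G(g)$ the centralizer, $G'$ the derived subgroup. (The formulas for $\chi_S,\chi_T$ are the general ones with $t=s$.) *)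

theory Defs
  imports "HOL-Algebra.Algebra"
begin

definition collinear :: "'l set \<Rightarrow> ('p \<Rightarrow> 'l \<Rightarrow> bool) \<Rightarrow> 'p \<Rightarrow> 'p \<Rightarrow> bool" where
  "collinear Lns Inc p q \<longleftrightarrow> (\<exists>l\<in>Lns. Inc p l \<and> Inc q l)"

definition finite_gq_of_order ::
  "'p set \<Rightarrow> 'l set \<Rightarrow> ('p \<Rightarrow> 'l \<Rightarrow> bool) \<Rightarrow> nat \<Rightarrow> bool" where
  "finite_gq_of_order Pts Lns Inc s \<longleftrightarrow>
     finite Pts \<and> finite Lns \<and>
     (\<forall>l\<in>Lns. card {p\<in>Pts. Inc p l} = s + 1) \<and>
     (\<forall>p\<in>Pts. card {l\<in>Lns. Inc p l} = s + 1) \<and>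
     (\<forall>p\<in>Pts. \<forall>q\<in>Pts. \<forall>l\<in>Lns. \<forall>m\<in>Lns.
        p \<noteq> q \<and> Inc p l \<and> Inc q l \<and> Inc p m \<and> Inc q m \<longrightarrow> l = m) \<and>
     (\<forall>p\<in>Pts. \<forall>l\<in>Lns. \<not> Inc p l \<longrightarrow>
        (\<exists>!q. q \<in> Pts \<and> Inc q l \<and> collinear Lns Inc p q))"

definition is_automorphism ::
  "'p set \<Rightarrow> 'l set \<Rightarrow> ('p \<Rightarrow> 'l \<Rightarrow> bool) \<Rightarrow> ('p \<Rightarrow> 'p) \<times> ('l \<Rightarrow> 'l) \<Rightarrow> bool" where
  "is_automorphism Pts Lns Inc \<theta> \<longleftrightarrow>
     bij_betw (fst \<theta>) Pts Pts \<and> bij_betw (snd \<theta>) Lns Lns \<and>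
     (\<forall>p\<in>Pts. \<forall>l\<in>Lns. Inc p l \<longleftrightarrow> Inc (fst \<theta> p) (snd \<theta> l))"

definition is_identity_aut ::
  "'p set \<Rightarrow> 'l set \<Rightarrow> ('p \<Rightarrow> 'p) \<times> ('l \<Rightarrow> 'l) \<Rightarrow> bool" where
  "is_identity_aut Pts Lns \<theta> \<longleftrightarrow> (\<forall>p\<in>Pts. fst \<theta> p = p) \<and> (\<forall>l\<in>Lns. snd \<theta> l = l)"

definition is_elation ::
  "'p set \<Rightarrow> 'l set \<Rightarrow> ('p \<Rightarrow> 'l \<Rightarrow> bool) \<Rightarrow> 'p \<Rightarrow> ('p \<Rightarrow> 'p) \<times> ('l \<Rightarrow> 'l) \<Rightarrow> bool" where
  "is_elation Pts Lns Inc x \<theta> \<longleftrightarrow>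
     is_automorphism Pts Lns Inc \<theta> \<and>
     (is_identity_aut Pts Lns \<theta> \<or>
      ((\<forall>l\<in>Lns. Inc x l \<longrightarrow> snd \<theta> l = l) \<and>
       (\<forall>p\<in>Pts. \<not> collinear Lns Inc x p \<longrightarrow> fst \<theta> p \<noteq> p)))"

definition is_symmetry ::
  "'p set \<Rightarrow> 'l set \<Rightarrow> ('p \<Rightarrow> 'l \<Rightarrow> bool) \<Rightarrow> 'p \<Rightarrow> ('p \<Rightarrow> 'p) \<times> ('l \<Rightarrow> 'l) \<Rightarrow> bool" where
  "is_symmetry Pts Lns Inc x \<theta> \<longleftrightarrow>
     is_elation Pts Lns Inc x \<theta> \<and>
     (\<forall>p\<in>Pts. collinear Lns Inc x p \<longrightarrow> fst \<theta> p = p)"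

definition faithful_aut_action ::
  "('g, 'm) monoid_scheme \<Rightarrow> 'p set \<Rightarrow> 'l set \<Rightarrow> ('p \<Rightarrow> 'l \<Rightarrow> bool) \<Rightarrow>
   ('g \<Rightarrow> ('p \<Rightarrow> 'p) \<times> ('l \<Rightarrow> 'l)) \<Rightarrow> bool" where
  "faithful_aut_action G Pts Lns Inc \<phi> \<longleftrightarrow>
     group G \<and>
     (\<forall>g\<in>carrier G. is_automorphism Pts Lns Inc (\<phi> g)) \<and>
     (\<forall>g\<in>carrier G. \<forall>h\<in>carrier G.
        (\<forall>p\<in>Pts. fst (\<phi> (g \<otimes>\<^bsub>G\<^esub> h)) p = fst (\<phi> g) (fst (\<phi> h) p)) \<and>
        (\<forall>l\<in>Lns. snd (\<phi> (g \<otimes>\<^bsub>G\<^esub> h)) l = snd (\<phi> g) (snd (\<phi> h) l))) \<and>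
     (\<forall>g\<in>carrier G. is_identity_aut Pts Lns (\<phi> g) \<longrightarrow> g = \<one>\<^bsub>G\<^esub>)"

definition is_EGQ ::
  "'p set \<Rightarrow> 'l set \<Rightarrow> ('p \<Rightarrow> 'l \<Rightarrow> bool) \<Rightarrow> nat \<Rightarrow> 'p \<Rightarrow>
   ('g, 'm) monoid_scheme \<Rightarrow> ('g \<Rightarrow> ('p \<Rightarrow> 'p) \<times> ('l \<Rightarrow> 'l)) \<Rightarrow> bool" where
  "is_EGQ Pts Lns Inc s x G \<phi> \<longleftrightarrow>
     finite_gq_of_order Pts Lns Inc s \<and> x \<in> Pts \<and>
     faithful_aut_action G Pts Lns Inc \<phi> \<and>
     (\<forall>g\<in>carrier G. is_elation Pts Lns Inc x (\<phi> g)) \<and>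
     (\<forall>y\<in>Pts. \<forall>z\<in>Pts. \<not> collinear Lns Inc x y \<longrightarrow> \<not> collinear Lns Inc x z \<longrightarrow>
        (\<exists>!g. g \<in> carrier G \<and> fst (\<phi> g) y = z))"

definition is_STGQ ::
  "'p set \<Rightarrow> 'l set \<Rightarrow> ('p \<Rightarrow> 'l \<Rightarrow> bool) \<Rightarrow> nat \<Rightarrow> 'p \<Rightarrow>
   ('g, 'm) monoid_scheme \<Rightarrow> ('g \<Rightarrow> ('p \<Rightarrow> 'p) \<times> ('l \<Rightarrow> 'l)) \<Rightarrow> bool" where
  "is_STGQ Pts Lns Inc s x G \<phi> \<longleftrightarrow>
     is_EGQ Pts Lns Inc s x G \<phi> \<and>
     (\<exists>S. subgroup S G \<and> card S = s \<and> (\<forall>g\<in>S. is_symmetry Pts Lns Inc x (\<phi> g)))"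

text \<open>The lines M_0, ..., M_s through y are indexed by the lines M themselves.\<close>
definition lines_through :: "'l set \<Rightarrow> ('p \<Rightarrow> 'l \<Rightarrow> bool) \<Rightarrow> 'p \<Rightarrow> 'l set" where
  "lines_through Lns Inc y = {M\<in>Lns. Inc y M}"

definition proj_pt :: "'p set \<Rightarrow> 'l set \<Rightarrow> ('p \<Rightarrow> 'l \<Rightarrow> bool) \<Rightarrow> 'p \<Rightarrow> 'l \<Rightarrow> 'p" where
  "proj_pt Pts Lns Inc x M = (THE z. z \<in> Pts \<and> Inc z M \<and> collinear Lns Inc x z)"

definition fam_A :: "('g, 'm) monoid_scheme \<Rightarrow> ('g \<Rightarrow> ('p \<Rightarrow> 'p) \<times> ('l \<Rightarrow> 'l)) \<Rightarrow> 'l \<Rightarrow> 'g set" where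
  "fam_A G \<phi> M = {g\<in>carrier G. snd (\<phi> g) M = M}"

definition fam_Astar :: "('g, 'm) monoid_scheme \<Rightarrow> ('g \<Rightarrow> ('p \<Rightarrow> 'p) \<times> ('l \<Rightarrow> 'l)) \<Rightarrow>
    'p set \<Rightarrow> 'l set \<Rightarrow> ('p \<Rightarrow> 'l \<Rightarrow> bool) \<Rightarrow> 'p \<Rightarrow> 'l \<Rightarrow> 'g set" where
  "fam_Astar G \<phi> Pts Lns Inc x M =
     {g\<in>carrier G. fst (\<phi> g) (proj_pt Pts Lns Inc x M) = proj_pt Pts Lns Inc x M}"

definition conj_class :: "('g, 'm) monoid_scheme \<Rightarrow> 'g \<Rightarrow> 'g set" where
  "conj_class G g = {h \<otimes>\<^bsub>G\<^esub> g \<otimes>\<^bsub>G\<^esub> inv\<^bsub>G\<^esub> h | h. h \<in> carrier G}"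

definition centralizer_of :: "('g, 'm) monoid_scheme \<Rightarrow> 'g \<Rightarrow> 'g set" where
  "centralizer_of G g = {h \<in> carrier G. h \<otimes>\<^bsub>G\<^esub> g = g \<otimes>\<^bsub>G\<^esub> h}"

definition abel_index :: "('g, 'm) monoid_scheme \<Rightarrow> nat" where
  "abel_index G = card (rcosets\<^bsub>G\<^esub> (derived G (carrier G)))"

definition chi_S :: "('g, 'm) monoid_scheme \<Rightarrow> ('g \<Rightarrow> ('p \<Rightarrow> 'p) \<times> ('l \<Rightarrow> 'l)) \<Rightarrow>
    'p set \<Rightarrow> 'l set \<Rightarrow> ('p \<Rightarrow> 'l \<Rightarrow> bool) \<Rightarrow> nat \<Rightarrow> 'p \<Rightarrow> 'p \<Rightarrow> 'g \<Rightarrow> real" where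
  "chi_S G \<phi> Pts Lns Inc s x y g =
     1 / (2 * real s ^ 2) *
     (\<Sum>M\<in>lines_through Lns Inc y.
        real (card (centralizer_of G g)) *
          (real s * real (card (fam_A G \<phi> M \<inter> conj_class G g))
           + real (card (fam_Astar G \<phi> Pts Lns Inc x M \<inter> conj_class G g)))
      - real (abel_index G) *
          (real s * real (card (fam_A G \<phi> M \<inter> (g <#\<^bsub>G\<^esub> derived G (carrier G))))
           + real (card (fam_Astar G \<phi> Pts Lns Inc x M \<inter> (g <#\<^bsub>G\<^esub> derived G (carrier G))))))"

definition chi_T :: "('g, 'm) monoid_scheme \<Rightarrow> ('g \<Rightarrow> ('p \<Rightarrow> 'p) \<times> ('l \<Rightarrow> 'l)) \<Rightarrow>
    'p set \<Rightarrow> 'l set \<Rightarrow> ('p \<Rightarrow> 'l \<Rightarrow> bool) \<Rightarrow> nat \<Rightarrow> 'p \<Rightarrow> 'p \<Rightarrow> 'g \<Rightarrow> real" where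
  "chi_T G \<phi> Pts Lns Inc s x y g =
     1 / (2 * real s ^ 2) *
     (\<Sum>M\<in>lines_through Lns Inc y.
        real (card (centralizer_of G g)) *
          (real s * real (card (fam_A G \<phi> M \<inter> conj_class G g))
           - real (card (fam_Astar G \<phi> Pts Lns Inc x M \<inter> conj_class G g)))
      - real (abel_index G) *
          (real s * real (card (fam_A G \<phi> M \<inter> (g <#\<^bsub>G\<^esub> derived G (carrier G))))
           - real (card (fam_Astar G \<phi> Pts Lns Inc x M \<inter> (g <#\<^bsub>G\<^esub> derived G (carrier G))))))"

definition U0 :: "('g, 'm) monoid_scheme \<Rightarrow> ('g \<Rightarrow> ('p \<Rightarrow> 'p) \<times> ('l \<Rightarrow> 'l)) \<Rightarrow>
    'p set \<Rightarrow> 'l set \<Rightarrow> ('p \<Rightarrow> 'l \<Rightarrow> bool) \<Rightarrow> 'p \<Rightarrow> 'p \<Rightarrow> 'g set" where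
  "U0 G \<phi> Pts Lns Inc x y =
     carrier G \<inter> (\<Inter>M\<in>lines_through Lns Inc y. fam_Astar G \<phi> Pts Lns Inc x M)"

end

theory Submission
  imports Defs
begin

lemma card_ge1_ex: "1 \<le> card A \<Longrightarrow> \<exists>x. x \<in> A"
  by (cases "A = {}") auto

lemma (in group) cancel_l1 [simp]:
  "a \<in> carrier G \<Longrightarrow> b \<in> carrier G \<Longrightarrow> a \<otimes> (inv a \<otimes> b) = b"
  by (simp add: m_assoc[symmetric])

lemma (in group) cancel_l2 [simp]:
  "a \<in> carrier G \<Longrightarrow> b \<in> carrier G \<Longrightarrow> inv a \<otimes> (a \<otimes> b) = b"
  by (simp add: m_assoc[symmetric])

lemma (in group) conj_fix_iff:
  assumes h: "h \<in> carrier G" and g: "g \<in> carrier G"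
  shows "(h \<otimes> g \<otimes> inv h = g) = (h \<otimes> g = g \<otimes> h)"
proof
  assume e: "h \<otimes> g \<otimes> inv h = g"
  have "h \<otimes> g = (h \<otimes> g \<otimes> inv h) \<otimes> h" using h g by (simp add: m_assoc)
  then show "h \<otimes> g = g \<otimes> h" using e by simp
next
  assume e: "h \<otimes> g = g \<otimes> h"
  have "h \<otimes> g \<otimes> inv h = g \<otimes> h \<otimes> inv h" using e by simp
  then show "h \<otimes> g \<otimes> inv h = g" using h g by (simp add: m_assoc)
qed

lemma (in group) conj_one_iff:
  assumes h: "h \<in> carrier G" and g: "g \<in> carrier G"
  shows "(h \<otimes> g \<otimes> inv h = \<one>) = (g = \<one>)"
proof
  assume e: "h \<otimes> g \<otimes> inv h = \<one>"
  have "g = inv h \<otimes> (h \<otimes> g \<otimes> inv h) \<otimes> h" using h g by (simp add: m_assoc)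
  then show "g = \<one>" using e h by simp
qed (use h in simp)

lemma (in group) card_lcoset:
  assumes H: "H \<subseteq> carrier G" and g: "g \<in> carrier G"
  shows "card (g <# H) = card H"
proof -
  have "g <# H = (\<lambda>h. g \<otimes> h) ` H" unfolding l_coset_def by auto
  moreover have "inj_on (\<lambda>h. g \<otimes> h) H" using inj_on_subset[OF inj_on_cmult[OF g] H] .
  ultimately show ?thesis by (simp add: card_image)
qed

lemma (in group) one_in_lcoset:
  assumes H: "subgroup H G" and g: "g \<in> carrier G"
  shows "(\<one> \<in> g <# H) = (g \<in> H)"
proof
  assume "\<one> \<in> g <# H"
  then obtain h where h: "h \<in> H" "\<one> = g \<otimes> h" unfolding l_coset_def by auto
  have hG: "h \<in> carrier G" using h H subgroup.subset by blast
  have "inv h = g" using inv_equality[OF h(2)[symmetric] hG g] .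
  then show "g \<in> H" using subgroup.m_inv_closed[OF H h(1)] by simp
next
  assume "g \<in> H"
  then have "inv g \<in> H" using subgroup.m_inv_closed[OF H] by blast
  then show "\<one> \<in> g <# H" unfolding l_coset_def using g by force
qed

lemma (in group) conj_prod:
  assumes "m \<in> carrier G" "n \<in> carrier G" "a \<in> carrier G"
  shows "inv (m \<otimes> n) \<otimes> a \<otimes> (m \<otimes> n) = inv n \<otimes> (inv m \<otimes> a \<otimes> m) \<otimes> n"
  using assms by (simp add: m_assoc inv_mult_group)

lemma (in group) conj_cancel:
  assumes "n \<in> carrier G" "t \<in> carrier G"
  shows "n \<otimes> (inv n \<otimes> t \<otimes> n) \<otimes> inv n = t"
  using assms by (simp add: m_assoc)

lemma (in group) conj_cancel2:
  assumes "n \<in> carrier G" "t \<in> carrier G"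
  shows "inv n \<otimes> (n \<otimes> t \<otimes> inv n) \<otimes> n = t"
  using assms by (simp add: m_assoc)

lemma (in group) comm_prod:
  assumes "a \<in> carrier G" "n \<in> carrier G" "p \<in> carrier G"
  shows "a \<otimes> (n \<otimes> p) \<otimes> inv a \<otimes> inv (n \<otimes> p) =
         (a \<otimes> n \<otimes> inv a \<otimes> inv n) \<otimes> (n \<otimes> (a \<otimes> p \<otimes> inv a \<otimes> inv p) \<otimes> inv n)"
  using assms by (simp add: m_assoc inv_mult_group)

lemma (in group) comm_split1:
  assumes "a \<in> carrier G" "b \<in> carrier G"
  shows "a \<otimes> b \<otimes> inv a \<otimes> inv b = (inv (inv a) \<otimes> b \<otimes> inv a) \<otimes> inv b"
  using assms by (simp add: m_assoc)

lemma (in group) comm_split2: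
  assumes "a \<in> carrier G" "b \<in> carrier G"
  shows "a \<otimes> b \<otimes> inv a \<otimes> inv b = a \<otimes> (inv (inv b) \<otimes> inv a \<otimes> inv b)"
  using assms by (simp add: m_assoc)

lemma (in group) prod_split:
  assumes "m \<in> carrier G" "q \<in> carrier G"
  shows "q = m \<otimes> (inv m \<otimes> q)"
  using assms by (simp add: m_assoc[symmetric])

locale stgq =
  fixes Pts :: "'p set" and Lns :: "'l set" and Inc :: "'p \<Rightarrow> 'l \<Rightarrow> bool"
    and G :: "('g, 'm) monoid_scheme" and \<phi> :: "'g \<Rightarrow> ('p \<Rightarrow> 'p) \<times> ('l \<Rightarrow> 'l)"
    and s :: nat and x y :: 'p and S :: "'g set"
  assumes finPts: "finite Pts" and finLns: "finite Lns"
    and line_card: "\<And>l. l\<in>Lns \<Longrightarrow> card {p\<in>Pts. Inc p l} = s + 1"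
    and pt_card: "\<And>p. p\<in>Pts \<Longrightarrow> card {l\<in>Lns. Inc p l} = s + 1"
    and uniq_line: "\<And>p q l m. \<lbrakk>p\<in>Pts; q\<in>Pts; l\<in>Lns; m\<in>Lns; p \<noteq> q; Inc p l; Inc q l; Inc p m; Inc q m\<rbrakk> \<Longrightarrow> l = m"
    and gq_ax: "\<And>p l. \<lbrakk>p\<in>Pts; l\<in>Lns; \<not> Inc p l\<rbrakk> \<Longrightarrow> (\<exists>!q. q \<in> Pts \<and> Inc q l \<and> collinear Lns Inc p q)"
    and xP: "x \<in> Pts"
    and grp: "group G"
    and aut: "\<And>g. g\<in>carrier G \<Longrightarrow> is_automorphism Pts Lns Inc (\<phi> g)"
    and hom: "\<And>g h p. \<lbrakk>g\<in>carrier G; h\<in>carrier G; p \<in> Pts\<rbrakk> \<Longrightarrow> fst (\<phi> (g \<otimes>\<^bsub>G\<^esub> h)) p = fst (\<phi> g) (fst (\<phi> h) p)"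
    and homl: "\<And>g h l. \<lbrakk>g\<in>carrier G; h\<in>carrier G; l \<in> Lns\<rbrakk> \<Longrightarrow> snd (\<phi> (g \<otimes>\<^bsub>G\<^esub> h)) l = snd (\<phi> g) (snd (\<phi> h) l)"
    and elat: "\<And>g. g\<in>carrier G \<Longrightarrow> is_elation Pts Lns Inc x (\<phi> g)"
    and reg: "\<And>u v. \<lbrakk>u\<in>Pts; v\<in>Pts; \<not> collinear Lns Inc x u; \<not> collinear Lns Inc x v\<rbrakk> \<Longrightarrow> (\<exists>!g. g \<in> carrier G \<and> fst (\<phi> g) u = v)"
    and subS: "subgroup S G" and cardS: "card S = s"
    and symS: "\<And>g. g\<in>S \<Longrightarrow> is_symmetry Pts Lns Inc x (\<phi> g)"
    and s2: "s \<ge> 2"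
    and yP: "y \<in> Pts" and ync: "\<not> collinear Lns Inc x y"
begin

abbreviation col where "col p q \<equiv> collinear Lns Inc p q"
abbreviation gp where "gp g \<equiv> fst (\<phi> g)"
abbreviation gl where "gl g \<equiv> snd (\<phi> g)"
definition Ox where "Ox = {p\<in>Pts. \<not> col x p}"

lemma G: "group G" by (rule grp)

lemma col_sym: "col p q = col q p" unfolding collinear_def by blast

lemma colI: "l \<in> Lns \<Longrightarrow> Inc p l \<Longrightarrow> Inc q l \<Longrightarrow> col p q"
  unfolding collinear_def by blast

lemma gp_bij: "g \<in> carrier G \<Longrightarrow> bij_betw (gp g) Pts Pts"
  using aut unfolding is_automorphism_def by blast
lemma gl_bij: "g \<in> carrier G \<Longrightarrow> bij_betw (gl g) Lns Lns"
  using aut unfolding is_automorphism_def by blast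
lemma gp_in: "g \<in> carrier G \<Longrightarrow> p \<in> Pts \<Longrightarrow> gp g p \<in> Pts"
  using gp_bij bij_betwE by blast
lemma gl_in: "g \<in> carrier G \<Longrightarrow> l \<in> Lns \<Longrightarrow> gl g l \<in> Lns"
  using gl_bij bij_betwE by blast
lemma inc_pres: "g \<in> carrier G \<Longrightarrow> p \<in> Pts \<Longrightarrow> l \<in> Lns \<Longrightarrow> Inc (gp g p) (gl g l) = Inc p l"
  using aut unfolding is_automorphism_def by blast

lemma fix_lines_x: "g \<in> carrier G \<Longrightarrow> l \<in> Lns \<Longrightarrow> Inc x l \<Longrightarrow> gl g l = l"
  using elat[of g] unfolding is_elation_def is_identity_aut_def by blast

lemma col_pres: assumes g: "g \<in> carrier G" and p: "p \<in> Pts" and q: "q \<in> Pts"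
  shows "col (gp g p) (gp g q) = col p q"
proof
  assume "col (gp g p) (gp g q)"
  then obtain l' where l': "l' \<in> Lns" "Inc (gp g p) l'" "Inc (gp g q) l'" unfolding collinear_def by blast
  then obtain l where l: "l \<in> Lns" "l' = gl g l" using gl_bij[OF g] by (metis bij_betw_imp_surj_on imageE)
  show "col p q" using l l' inc_pres[OF g] p q colI by metis
next
  assume "col p q"
  then obtain l where l: "l \<in> Lns" "Inc p l" "Inc q l" unfolding collinear_def by blast
  then show "col (gp g p) (gp g q)" using inc_pres[OF g] p q colI gl_in[OF g] by metis
qed

lemma gp_one: assumes p: "p \<in> Pts" shows "gp \<one>\<^bsub>G\<^esub> p = p"
proof -
  have o: "\<one>\<^bsub>G\<^esub> \<in> carrier G" by (simp add: group.is_monoid[OF G])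
  have "gp \<one>\<^bsub>G\<^esub> (gp \<one>\<^bsub>G\<^esub> p) = gp \<one>\<^bsub>G\<^esub> p"
    using hom[OF o o p] by (simp add: group.is_monoid[OF G])
  moreover have "inj_on (gp \<one>\<^bsub>G\<^esub>) Pts" using gp_bij[OF o] bij_betw_def by blast
  ultimately show ?thesis using gp_in[OF o p] p by (meson inj_onD)
qed

lemma gp_inv: assumes g: "g \<in> carrier G" and p: "p \<in> Pts"
  shows "gp (inv\<^bsub>G\<^esub> g) (gp g p) = p" "gp g (gp (inv\<^bsub>G\<^esub> g) p) = p"
proof -
  have i: "inv\<^bsub>G\<^esub> g \<in> carrier G" using g by (simp add: group.inv_closed[OF G])
  show "gp (inv\<^bsub>G\<^esub> g) (gp g p) = p" using hom[OF i g p] gp_one[OF p] group.l_inv[OF G g] by simp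
  show "gp g (gp (inv\<^bsub>G\<^esub> g) p) = p" using hom[OF g i p] gp_one[OF p] group.r_inv[OF G g] by simp
qed

lemma colx_pres: assumes g: "g \<in> carrier G" and p: "p \<in> Pts" and c: "col x p"
  shows "col x (gp g p)"
proof -
  obtain l where l: "l \<in> Lns" "Inc x l" "Inc p l" using c unfolding collinear_def by blast
  have "Inc (gp g p) (gl g l)" using inc_pres[OF g p l(1)] l by simp
  then show ?thesis using fix_lines_x[OF g l(1,2)] l colI by metis
qed

lemma colx_pres_iff: assumes g: "g \<in> carrier G" and p: "p \<in> Pts"
  shows "col x (gp g p) = col x p"
  using colx_pres[OF g p] colx_pres[OF group.inv_closed[OF G g] gp_in[OF g p]] gp_inv[OF g p] by auto

lemma O_pres: "g \<in> carrier G \<Longrightarrow> p \<in> Ox \<Longrightarrow> gp g p \<in> Ox"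
  unfolding Ox_def using colx_pres_iff gp_in by auto

lemma yO: "y \<in> Ox" using yP ync Ox_def by auto

lemma ev_inj: "g \<in> carrier G \<Longrightarrow> h \<in> carrier G \<Longrightarrow> gp g y = gp h y \<Longrightarrow> g = h"
  using reg[of y "gp g y"] yO O_pres[of g y] unfolding Ox_def by auto

lemma ev_surj: "u \<in> Ox \<Longrightarrow> \<exists>g\<in>carrier G. gp g y = u"
  using reg[of y u] yO unfolding Ox_def by auto

lemma ev_one: "g \<in> carrier G \<Longrightarrow> gp g y = y \<Longrightarrow> g = \<one>\<^bsub>G\<^esub>"
  using ev_inj[of g "\<one>\<^bsub>G\<^esub>"] gp_one[OF yP] group.is_monoid[OF G] by (simp add: monoid.one_closed)

lemma Lp_card: "p \<in> Pts \<Longrightarrow> card {l\<in>Lns. Inc p l} = s + 1" by (rule pt_card)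
lemma Lp_fin: "finite {l\<in>Lns. Inc p l}" using finLns by simp
lemma Pl_fin: "finite {p\<in>Pts. Inc p l}" using finPts by simp

lemma ex_line: assumes "p \<in> Pts" shows "\<exists>l\<in>Lns. Inc p l"
proof -
  have "card {l\<in>Lns. Inc p l} \<noteq> 0" using pt_card[OF assms] by simp
  then have "{l\<in>Lns. Inc p l} \<noteq> {}" by (metis card.empty)
  then show ?thesis by blast
qed

lemma colxw_line: "col x w \<Longrightarrow> \<exists>L\<in>Lns. Inc x L \<and> Inc w L"
  unfolding collinear_def by blast

lemma off_line:
  assumes w: "w \<in> Pts" "w \<noteq> x" and L: "L \<in> Lns" "Inc x L" "Inc w L"
    and K: "K \<in> Lns" "Inc w K" "K \<noteq> L" and p: "p \<in> Pts" "Inc p K" "p \<noteq> w"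
  shows "p \<in> Ox"
proof (rule ccontr)
  assume "p \<notin> Ox"
  then have cp: "col x p" using p unfolding Ox_def by auto
  have xK: "\<not> Inc x K" using uniq_line[OF xP w(1) K(1) L(1)] w K L by metis
  have cw: "col x w" using colI[OF L] .
  from gq_ax[OF xP K(1) xK] have "\<exists>!q. q \<in> Pts \<and> Inc q K \<and> col x q" .
  then have "p = w" using cp cw p w K by blast
  then show False using p by simp
qed

lemma C1: assumes w: "w \<in> Pts" "col x w" "w \<noteq> x"
  shows "card {u\<in>Ox. col u w} = s * s"
proof -
  obtain L where L: "L \<in> Lns" "Inc x L" "Inc w L" using colxw_line[OF w(2)] by blast
  let ?F = "\<lambda>K. {p\<in>Pts. Inc p K} - {w}"
  let ?I = "{l\<in>Lns. Inc w l} - {L}"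
  have eq: "{u\<in>Ox. col u w} = (\<Union>K\<in>?I. ?F K)"
  proof
    show "{u\<in>Ox. col u w} \<subseteq> (\<Union>K\<in>?I. ?F K)"
    proof
      fix u assume u: "u \<in> {u\<in>Ox. col u w}"
      then obtain K where K: "K \<in> Lns" "Inc u K" "Inc w K" unfolding collinear_def by blast
      have uO: "u \<in> Pts" "\<not> col x u" using u unfolding Ox_def by auto
      have "u \<noteq> w" using uO w by auto
      moreover have "K \<noteq> L" using K L uO colI by metis
      ultimately show "u \<in> (\<Union>K\<in>?I. ?F K)" using K uO by blast
    qed
  next
    show "(\<Union>K\<in>?I. ?F K) \<subseteq> {u\<in>Ox. col u w}"
    proof
      fix u assume "u \<in> (\<Union>K\<in>?I. ?F K)"
      then obtain K where K: "K \<in> Lns" "Inc w K" "K \<noteq> L" "u \<in> Pts" "Inc u K" "u \<noteq> w" by blast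
      have "u \<in> Ox" using off_line[OF w(1) w(3) L K] by blast
      moreover have "col u w" using colI[OF K(1) K(5) K(2)] .
      ultimately show "u \<in> {u\<in>Ox. col u w}" by blast
    qed
  qed
  have fin: "finite ?I" using Lp_fin by simp
  have disj: "\<forall>K1\<in>?I. \<forall>K2\<in>?I. K1 \<noteq> K2 \<longrightarrow> ?F K1 \<inter> ?F K2 = {}"
  proof (intro ballI impI)
    fix K1 K2 assume K: "K1 \<in> ?I" "K2 \<in> ?I" "K1 \<noteq> K2"
    show "?F K1 \<inter> ?F K2 = {}"
    proof (rule ccontr)
      assume "?F K1 \<inter> ?F K2 \<noteq> {}"
      then obtain p where p: "p \<in> Pts" "Inc p K1" "Inc p K2" "p \<noteq> w" by blast
      have "K1 = K2" using uniq_line[of p w K1 K2] p w(1) K by blast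
      then show False using K(3) by simp
    qed
  qed
  have finF: "\<forall>K\<in>?I. finite (?F K)" using Pl_fin by blast
  have cF: "\<And>K. K \<in> ?I \<Longrightarrow> card (?F K) = s"
  proof -
    fix K assume "K \<in> ?I"
    then have "K \<in> Lns" "w \<in> {p\<in>Pts. Inc p K}" using w by auto
    then show "card (?F K) = s" using line_card[of K] Pl_fin by (simp add: card_Diff_singleton)
  qed
  have cI: "card ?I = s" using pt_card[OF w(1)] L by (simp add: card_Diff_singleton Lp_fin)
  have "card (\<Union>K\<in>?I. ?F K) = (\<Sum>K\<in>?I. card (?F K))"
    by (rule card_UN_disjoint[OF fin finF disj])
  also have "\<dots> = s * s" using cF cI by simp
  finally show ?thesis using eq by (simp only:)
qed

lemma C2: "card Ox = s ^ 3"
proof -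
  obtain L where L: "L \<in> Lns" "Inc x L" using ex_line[OF xP] by blast
  let ?W = "{w\<in>Pts. Inc w L} - {x}"
  have eq: "Ox = (\<Union>w\<in>?W. {u\<in>Ox. col u w})"
  proof
    show "Ox \<subseteq> (\<Union>w\<in>?W. {u\<in>Ox. col u w})"
    proof
      fix u assume u: "u \<in> Ox"
      then have uP: "u \<in> Pts" "\<not> col x u" unfolding Ox_def by auto
      have "\<not> Inc u L" using uP L colI by metis
      then obtain q where q: "q \<in> Pts" "Inc q L" "col u q" using gq_ax[OF uP(1) L(1)] by blast
      have "q \<noteq> x" using q uP col_sym by metis
      then show "u \<in> (\<Union>w\<in>?W. {u\<in>Ox. col u w})" using q u by blast
    qed
  qed blast
  have disj: "\<forall>w1\<in>?W. \<forall>w2\<in>?W. w1 \<noteq> w2 \<longrightarrow> {u\<in>Ox. col u w1} \<inter> {u\<in>Ox. col u w2} = {}"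
  proof (intro ballI impI)
    fix w1 w2 assume w: "w1 \<in> ?W" "w2 \<in> ?W" "w1 \<noteq> w2"
    show "{u\<in>Ox. col u w1} \<inter> {u\<in>Ox. col u w2} = {}"
    proof (rule ccontr)
      assume "{u\<in>Ox. col u w1} \<inter> {u\<in>Ox. col u w2} \<noteq> {}"
      then obtain u where u: "u \<in> Ox" "col u w1" "col u w2" by blast
      then have uP: "u \<in> Pts" "\<not> col x u" unfolding Ox_def by auto
      have "\<not> Inc u L" using uP L colI by metis
      then have "\<exists>!q. q \<in> Pts \<and> Inc q L \<and> col u q" using gq_ax[OF uP(1) L(1)] by blast
      then show False using u w by blast
    qed
  qed
  have fin: "finite ?W" using Pl_fin by simp
  have cW: "card ?W = s" using line_card[OF L(1)] L xP by (simp add: card_Diff_singleton Pl_fin)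
  have cF: "\<And>w. w \<in> ?W \<Longrightarrow> card {u\<in>Ox. col u w} = s * s"
    using C1 L colI by (metis (no_types, lifting) DiffE insertI1 mem_Collect_eq)
  have finO: "finite Ox" using finPts unfolding Ox_def by simp
  have "card (\<Union>w\<in>?W. {u\<in>Ox. col u w}) = (\<Sum>w\<in>?W. card {u\<in>Ox. col u w})"
    by (rule card_UN_disjoint[OF fin _ disj]) (use finO in auto)
  also have "\<dots> = s * (s * s)" using cF cW by simp
  finally have "card (\<Union>w\<in>?W. {u\<in>Ox. col u w}) = s ^ 3" by (simp add: power3_eq_cube)
  then show ?thesis using eq by (simp only:)
qed

lemma C3: assumes z1: "z1 \<in> Pts" "col x z1" "z1 \<noteq> x" and z2: "z2 \<in> Pts" and nc: "\<not> col z1 z2"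
  shows "card {u\<in>Ox. col u z1 \<and> col u z2} \<le> s"
proof -
  obtain L where L: "L \<in> Lns" "Inc x L" "Inc z1 L" using colxw_line[OF z1(2)] by blast
  let ?I = "{l\<in>Lns. Inc z1 l} - {L}"
  define f where "f K = (THE q. q \<in> Pts \<and> Inc q K \<and> col z2 q)" for K
  have sub: "{u\<in>Ox. col u z1 \<and> col u z2} \<subseteq> f ` ?I"
  proof
    fix u assume u: "u \<in> {u\<in>Ox. col u z1 \<and> col u z2}"
    then have uP: "u \<in> Pts" "\<not> col x u" "col u z2" unfolding Ox_def by auto
    obtain K where K: "K \<in> Lns" "Inc u K" "Inc z1 K" using u unfolding collinear_def by blast
    have KL: "K \<noteq> L" using K L uP colI by metis
    have z2K: "\<not> Inc z2 K" using K nc colI by metis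
    have "\<exists>!q. q \<in> Pts \<and> Inc q K \<and> col z2 q" using gq_ax[OF z2 K(1) z2K] .
    moreover have "u \<in> Pts \<and> Inc u K \<and> col z2 u" using uP K col_sym by blast
    ultimately have "f K = u" unfolding f_def by (rule the1_equality)
    then show "u \<in> f ` ?I" using K KL by blast
  qed
  have "card {u\<in>Ox. col u z1 \<and> col u z2} \<le> card (f ` ?I)"
    by (rule card_mono) (use Lp_fin sub in auto)
  also have "\<dots> \<le> card ?I" by (rule card_image_le) (use Lp_fin in auto)
  also have "\<dots> = s" using pt_card[OF z1(1)] L by (simp add: card_Diff_singleton Lp_fin)
  finally show ?thesis .
qed

lemma C4: assumes z1: "z1 \<in> Pts" "col x z1" "z1 \<noteq> x" and w: "w \<in> Pts" and nc: "\<not> col z1 w"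
  shows "\<exists>u\<in>Ox. col u z1 \<and> col u w"
proof -
  obtain L where L: "L \<in> Lns" "Inc x L" "Inc z1 L" using colxw_line[OF z1(2)] by blast
  let ?I = "{l\<in>Lns. Inc z1 l} - {L}"
  have "card ?I = s" using pt_card[OF z1(1)] L by (simp add: card_Diff_singleton Lp_fin)
  then have "card ?I \<noteq> 0" using s2 by simp
  then have "?I \<noteq> {}" by (metis card.empty)
  then obtain K where K: "K \<in> Lns" "Inc z1 K" "K \<noteq> L" by blast
  have wK: "\<not> Inc w K" using K nc colI by metis
  obtain q where q: "q \<in> Pts" "Inc q K" "col w q" using gq_ax[OF w K(1) wK] by blast
  have "q \<noteq> z1" using q nc col_sym by metis
  then have "q \<in> Ox" using off_line[OF z1(1) z1(3) L K q(1,2)] by blast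
  moreover have "col q z1" using colI[OF K(1) q(2) K(2)] .
  ultimately show ?thesis using q col_sym by metis
qed

definition Y where "Y = lines_through Lns Inc y"
definition z where "z M = proj_pt Pts Lns Inc x M"
definition B where "B M = fam_Astar G \<phi> Pts Lns Inc x M"

lemma Y_def': "Y = {M\<in>Lns. Inc y M}" unfolding Y_def lines_through_def by simp
lemma Y_fin: "finite Y" unfolding Y_def' using finLns by simp
lemma Y_card: "card Y = s + 1" unfolding Y_def' using pt_card[OF yP] .

lemma xM: "M \<in> Y \<Longrightarrow> \<not> Inc x M" using ync colI unfolding Y_def' by blast

lemma z_ex1: "M \<in> Y \<Longrightarrow> \<exists>!q. q \<in> Pts \<and> Inc q M \<and> col x q"
  using gq_ax[OF xP _ xM] unfolding Y_def' by blast

lemma z_props: assumes "M \<in> Y" shows "z M \<in> Pts" "Inc (z M) M" "col x (z M)"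
  using theI'[OF z_ex1[OF assms]] unfolding z_def proj_pt_def by auto

lemma z_uniq: "M \<in> Y \<Longrightarrow> q \<in> Pts \<Longrightarrow> Inc q M \<Longrightarrow> col x q \<Longrightarrow> q = z M"
  using z_ex1 z_props by blast

lemma z_ne_x: "M \<in> Y \<Longrightarrow> z M \<noteq> x" using z_props xM by metis

lemma y_ne_z: "M \<in> Y \<Longrightarrow> y \<noteq> z M" using z_props ync by metis

lemma col_yz: "M \<in> Y \<Longrightarrow> col y (z M)" using z_props colI unfolding Y_def' by blast

lemma z_inj: assumes M: "M \<in> Y" and N: "N \<in> Y" and MN: "M \<noteq> N" shows "z M \<noteq> z N"
proof
  assume e: "z M = z N"
  have "M = N" using uniq_line[of y "z M" M N] yP z_props[OF M] y_ne_z[OF M] z_props(2)[OF N] e M N unfolding Y_def' by auto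
  then show False using MN by simp
qed

lemma zN_notin_M: assumes M: "M \<in> Y" and N: "N \<in> Y" and MN: "M \<noteq> N" shows "\<not> Inc (z N) M"
  using z_uniq[OF M z_props(1)[OF N] _ z_props(3)[OF N]] z_inj[OF M N MN] by metis

lemma z_nc: assumes M: "M \<in> Y" and N: "N \<in> Y" and MN: "M \<noteq> N" shows "\<not> col (z M) (z N)"
proof
  assume "col (z M) (z N)"
  then obtain K where K: "K \<in> Lns" "Inc (z M) K" "Inc (z N) K" unfolding collinear_def by blast
  show False
  proof (cases "Inc y K")
    case True
    have "K = M" using uniq_line[OF yP z_props(1)[OF M] K(1) _ y_ne_z[OF M]] True K M z_props(2)[OF M]
      unfolding Y_def' by blast
    then show False using zN_notin_M[OF M N MN] K by simp
  next
    case False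
    have "\<exists>!q. q \<in> Pts \<and> Inc q K \<and> col y q" using gq_ax[OF yP K(1) False] .
    then show False using K z_props[OF M] z_props[OF N] col_yz[OF M] col_yz[OF N] z_inj[OF M N MN] by blast
  qed
qed

lemma K1: assumes p: "p \<in> Ox" and w: "w \<in> Pts" "col x w" "w \<noteq> x" and pw: "col p w"
  and g: "g \<in> carrier G"
  shows "gp g w = w \<longleftrightarrow> col (gp g p) w"
proof
  have pP: "p \<in> Pts" using p Ox_def by auto
  assume "gp g w = w"
  then show "col (gp g p) w" using col_pres[OF g pP w(1)] pw by simp
next
  have pP: "p \<in> Pts" using p Ox_def by auto
  assume c: "col (gp g p) w"
  obtain L where L: "L \<in> Lns" "Inc x L" "Inc w L" using colxw_line[OF w(2)] by blast
  have gL: "gl g L = L" using fix_lines_x[OF g L(1,2)] .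
  have gw: "Inc (gp g w) L" using inc_pres[OF g w(1) L(1)] L gL by simp
  have gpO: "gp g p \<in> Ox" using O_pres[OF g p] .
  then have gpP: "gp g p \<in> Pts" "\<not> col x (gp g p)" unfolding Ox_def by auto
  have nL: "\<not> Inc (gp g p) L" using gpP L colI by metis
  have "\<exists>!q. q \<in> Pts \<and> Inc q L \<and> col (gp g p) q" using gq_ax[OF gpP(1) L(1) nL] .
  moreover have "col (gp g p) (gp g w)" using col_pres[OF g pP w(1)] pw by simp
  ultimately show "gp g w = w" using gw gp_in[OF g w(1)] w L c by blast
qed

lemma B_def': "B M = {g\<in>carrier G. gp g (z M) = z M}"
  unfolding B_def fam_Astar_def z_def by simp

lemma B_char: assumes M: "M \<in> Y" and g: "g \<in> carrier G"
  shows "g \<in> B M \<longleftrightarrow> col (gp g y) (z M)"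
  using K1[OF yO z_props(1,3)[OF M] z_ne_x[OF M] col_yz[OF M] g] g unfolding B_def' by auto

lemma carrier_fin: "finite (carrier G)"
proof -
  have "inj_on (\<lambda>g. gp g y) (carrier G)" using ev_inj by (meson inj_onI)
  moreover have "(\<lambda>g. gp g y) ` carrier G \<subseteq> Ox" using O_pres yO by auto
  moreover have "finite Ox" using finPts Ox_def by simp
  ultimately show ?thesis using finite_imageD finite_subset by metis
qed

lemma carrier_card: "card (carrier G) = s ^ 3"
proof -
  have "bij_betw (\<lambda>g. gp g y) (carrier G) Ox"
    unfolding bij_betw_def
  proof
    show "inj_on (\<lambda>g. gp g y) (carrier G)" using ev_inj by (auto intro: inj_onI)
    show "(\<lambda>g. gp g y) ` carrier G = Ox"
    proof
      show "(\<lambda>g. gp g y) ` carrier G \<subseteq> Ox" using O_pres yO by auto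
      show "Ox \<subseteq> (\<lambda>g. gp g y) ` carrier G"
      proof
        fix u assume "u \<in> Ox"
        then obtain g where "g \<in> carrier G" "gp g y = u" using ev_surj by blast
        then show "u \<in> (\<lambda>g. gp g y) ` carrier G" by blast
      qed
    qed
  qed
  then have "card (carrier G) = card Ox" by (rule bij_betw_same_card)
  then show ?thesis using C2 by simp
qed

lemma B_card: assumes M: "M \<in> Y" shows "card (B M) = s * s"
proof -
  have "bij_betw (\<lambda>g. gp g y) (B M) {u\<in>Ox. col u (z M)}"
    unfolding bij_betw_def
  proof
    show "inj_on (\<lambda>g. gp g y) (B M)" using ev_inj unfolding B_def' by (auto intro: inj_onI)
    show "(\<lambda>g. gp g y) ` B M = {u \<in> Ox. col u (z M)}"
    proof
      show "(\<lambda>g. gp g y) ` B M \<subseteq> {u \<in> Ox. col u (z M)}"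
        using B_char[OF M] O_pres yO unfolding B_def' by auto
      show "{u \<in> Ox. col u (z M)} \<subseteq> (\<lambda>g. gp g y) ` B M"
      proof
        fix u assume u: "u \<in> {u \<in> Ox. col u (z M)}"
        then obtain g where g: "g \<in> carrier G" "gp g y = u" using ev_surj by blast
        then have "g \<in> B M" using B_char[OF M g(1)] u by simp
        then show "u \<in> (\<lambda>g. gp g y) ` B M" using g by blast
      qed
    qed
  qed
  then have "card (B M) = card {u\<in>Ox. col u (z M)}" by (rule bij_betw_same_card)
  then show ?thesis using C1[OF z_props(1,3)[OF M] z_ne_x[OF M]] by simp
qed

lemma B_sub: assumes M: "M \<in> Y" shows "subgroup (B M) G"
proof -
  have zP: "z M \<in> Pts" using z_props[OF M] by simp
  show ?thesis
  proof
    show "B M \<subseteq> carrier G" unfolding B_def' by auto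
    show "\<And>a b. a \<in> B M \<Longrightarrow> b \<in> B M \<Longrightarrow> a \<otimes>\<^bsub>G\<^esub> b \<in> B M"
      unfolding B_def' using hom zP group.is_monoid[OF G] by (auto simp: monoid.m_closed)
    show "\<one>\<^bsub>G\<^esub> \<in> B M" unfolding B_def' using gp_one[OF zP] group.is_monoid[OF G] by (auto simp: monoid.one_closed)
    show "\<And>a. a \<in> B M \<Longrightarrow> inv\<^bsub>G\<^esub> a \<in> B M"
      unfolding B_def' using gp_inv zP group.inv_closed[OF G] by (auto, metis)
  qed
qed

lemma S_sub: "S \<subseteq> carrier G" using subS subgroup.subset by blast

lemma S_B: assumes M: "M \<in> Y" shows "S \<subseteq> B M"
  using symS z_props[OF M] S_sub unfolding B_def' is_symmetry_def by blast

lemma BB: assumes M: "M \<in> Y" and N: "N \<in> Y" and MN: "M \<noteq> N" shows "B M \<inter> B N = S"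
proof -
  have sub: "(\<lambda>g. gp g y) ` (B M \<inter> B N) \<subseteq> {u\<in>Ox. col u (z M) \<and> col u (z N)}"
    using B_char[OF M] B_char[OF N] O_pres yO unfolding B_def' by auto
  have inj: "inj_on (\<lambda>g. gp g y) (B M \<inter> B N)" using ev_inj unfolding B_def' by (auto intro: inj_onI)
  have finO: "finite {u\<in>Ox. col u (z M) \<and> col u (z N)}" using finPts Ox_def by simp
  have "card (B M \<inter> B N) = card ((\<lambda>g. gp g y) ` (B M \<inter> B N))" using card_image[OF inj] by simp
  also have "\<dots> \<le> card {u\<in>Ox. col u (z M) \<and> col u (z N)}" using card_mono[OF finO sub] .
  also have "\<dots> \<le> s" using C3[OF z_props(1,3)[OF M] z_ne_x[OF M] z_props(1)[OF N] z_nc[OF M N MN]] .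
  finally have c: "card (B M \<inter> B N) \<le> card S" using cardS by simp
  have fin: "finite (B M \<inter> B N)" using carrier_fin unfolding B_def' by auto
  have "S \<subseteq> B M \<inter> B N" using S_B[OF M] S_B[OF N] by blast
  then show ?thesis using card_seteq[OF fin _ c] by blast
qed

lemma three_lines: "\<exists>M N P. M \<in> Y \<and> N \<in> Y \<and> P \<in> Y \<and> M \<noteq> N \<and> M \<noteq> P \<and> N \<noteq> P"
proof -
  have "card Y \<ge> 3" using Y_card s2 by simp
  then obtain M where M: "M \<in> Y" using card_ge1_ex[of "_"] by (meson dual_order.trans one_le_numeral)
  have "card (Y - {M}) \<ge> 2" using \<open>card Y \<ge> 3\<close> M Y_fin by (simp add: card_Diff_singleton)
  then obtain N where N: "N \<in> Y - {M}" using card_ge1_ex[of "_"] by (meson dual_order.trans one_le_numeral)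
  have "card (Y - {M} - {N}) \<ge> 1" using \<open>card (Y - {M}) \<ge> 2\<close> N Y_fin by (simp add: card_Diff_singleton)
  then obtain P where P: "P \<in> Y - {M} - {N}" using card_ge1_ex[of "_"] by (meson dual_order.trans one_le_numeral)
  show ?thesis using M N P by blast
qed

lemma other_line: "M \<in> Y \<Longrightarrow> \<exists>N\<in>Y. N \<noteq> M"
  using three_lines by metis

lemma U0_S: "U0 G \<phi> Pts Lns Inc x y \<subseteq> S"
proof -
  obtain M N where MN: "M \<in> Y" "N \<in> Y" "M \<noteq> N" using three_lines by blast
  have "U0 G \<phi> Pts Lns Inc x y \<subseteq> B M \<inter> B N"
    using MN unfolding U0_def B_def Y_def by blast
  then show ?thesis using BB[OF MN] by simp
qed

lemma S_normal: assumes g: "g \<in> carrier G" and a: "a \<in> S"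
  shows "g \<otimes>\<^bsub>G\<^esub> a \<otimes>\<^bsub>G\<^esub> inv\<^bsub>G\<^esub> g \<in> S"
proof -
  obtain M N where MN: "M \<in> Y" "N \<in> Y" "M \<noteq> N" using three_lines by blast
  interpret G: group G by (rule grp)
  have aG: "a \<in> carrier G" using a S_sub by blast
  have ig: "inv\<^bsub>G\<^esub> g \<in> carrier G" using g group.inv_closed[OF G] by blast
  have fx: "gp (g \<otimes>\<^bsub>G\<^esub> a \<otimes>\<^bsub>G\<^esub> inv\<^bsub>G\<^esub> g) w = w" if w: "w \<in> Pts" "col x w" for w
  proof -
    have w1: "gp (inv\<^bsub>G\<^esub> g) w \<in> Pts" "col x (gp (inv\<^bsub>G\<^esub> g) w)" using gp_in[OF ig w(1)] colx_pres[OF ig w] by auto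
    have "gp a (gp (inv\<^bsub>G\<^esub> g) w) = gp (inv\<^bsub>G\<^esub> g) w" using symS[OF a] w1 unfolding is_symmetry_def by blast
    then show ?thesis
      using hom[OF G.m_closed[OF g aG] ig w(1)] hom[OF g aG w1(1)] gp_inv(2)[OF g w(1)] by simp
  qed
  have c: "g \<otimes>\<^bsub>G\<^esub> a \<otimes>\<^bsub>G\<^esub> inv\<^bsub>G\<^esub> g \<in> carrier G" using g aG ig by simp
  have "g \<otimes>\<^bsub>G\<^esub> a \<otimes>\<^bsub>G\<^esub> inv\<^bsub>G\<^esub> g \<in> B M"
    unfolding B_def' using fx[OF z_props(1)[OF MN(1)] z_props(3)[OF MN(1)]] c by simp
  moreover have "g \<otimes>\<^bsub>G\<^esub> a \<otimes>\<^bsub>G\<^esub> inv\<^bsub>G\<^esub> g \<in> B N"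
    unfolding B_def' using fx[OF z_props(1)[OF MN(2)] z_props(3)[OF MN(2)]] c by simp
  ultimately have "g \<otimes>\<^bsub>G\<^esub> a \<otimes>\<^bsub>G\<^esub> inv\<^bsub>G\<^esub> g \<in> B M \<inter> B N" by blast
  then show ?thesis using BB[OF MN] by simp
qed

lemma AB1: assumes M: "M \<in> Y" and N: "N \<in> Y" and MN: "M \<noteq> N"
  and a: "a \<in> fam_A G \<phi> M" and aB: "a \<in> B N"
  shows "a = \<one>\<^bsub>G\<^esub>"
proof -
  have aG: "a \<in> carrier G" and aM: "gl a M = M" using a unfolding fam_A_def by auto
  have Mln: "M \<in> Lns" "Inc y M" using M unfolding Y_def' by auto
  have ay: "Inc (gp a y) M" using inc_pres[OF aG yP Mln(1)] Mln aM by simp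
  have c: "col (gp a y) (z N)" using B_char[OF N aG] aB by simp
  have "\<exists>!q. q \<in> Pts \<and> Inc q M \<and> col (z N) q"
    using gq_ax[OF z_props(1)[OF N] Mln(1) zN_notin_M[OF M N MN]] .
  then have "gp a y = y" using ay c col_yz[OF N] gp_in[OF aG yP] yP Mln col_sym by blast
  then show ?thesis using ev_one[OF aG] by simp
qed

lemma fix_x: assumes g: "g \<in> carrier G" shows "gp g x = x"
proof (rule ccontr)
  assume ne: "gp g x \<noteq> x"
  have "card {l\<in>Lns. Inc x l} \<ge> 2" using pt_card[OF xP] s2 by simp
  then obtain L1 where L1: "L1 \<in> {l\<in>Lns. Inc x l}" using card_ge1_ex[of "_"] by (meson dual_order.trans one_le_numeral)
  have "card ({l\<in>Lns. Inc x l} - {L1}) \<ge> 1" using \<open>card {l\<in>Lns. Inc x l} \<ge> 2\<close> L1 Lp_fin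
    by (simp add: card_Diff_singleton)
  then obtain L2 where L2: "L2 \<in> {l\<in>Lns. Inc x l} - {L1}" using card_ge1_ex[of "_"] by (meson dual_order.trans one_le_numeral)
  have i1: "Inc (gp g x) L1" using inc_pres[OF g xP] L1 fix_lines_x[OF g] by force
  have i2: "Inc (gp g x) L2" using inc_pres[OF g xP] L2 fix_lines_x[OF g] by force
  have "L1 = L2" using uniq_line[OF gp_in[OF g xP] xP _ _ ne i1 _ i2] L1 L2 by blast
  then show False using L2 by blast
qed

lemma B_prod: assumes M: "M \<in> Y" and N: "N \<in> Y" and MN: "M \<noteq> N" and q: "q \<in> carrier G"
  shows "\<exists>m\<in>B M. \<exists>n\<in>B N. q = m \<otimes>\<^bsub>G\<^esub> n"
proof -
  interpret G: group G by (rule grp)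
  obtain LN where LN: "LN \<in> Lns" "Inc x LN" "Inc (z N) LN" using colxw_line[OF z_props(3)[OF N]] by blast
  define w where "w = gp q (z N)"
  have wP: "w \<in> Pts" unfolding w_def using gp_in[OF q z_props(1)[OF N]] .
  have wL: "Inc w LN" unfolding w_def using inc_pres[OF q z_props(1)[OF N] LN(1)] LN fix_lines_x[OF q] by simp
  have wx: "w \<noteq> x"
  proof
    assume "w = x"
    then have "gp (inv\<^bsub>G\<^esub> q) w = gp (inv\<^bsub>G\<^esub> q) x" by simp
    then have "z N = x" using gp_inv(1)[OF q z_props(1)[OF N]] fix_x[OF G.inv_closed[OF q]] unfolding w_def by simp
    then show False using z_ne_x[OF N] by simp
  qed
  have zML: "\<not> Inc (z M) LN" using z_nc[OF M N MN] LN colI by metis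
  have nc: "\<not> col (z M) w"
  proof
    assume c: "col (z M) w"
    have "\<exists>!r. r \<in> Pts \<and> Inc r LN \<and> col (z M) r" using gq_ax[OF z_props(1)[OF M] LN(1) zML] .
    then show False using c wP wL xP LN z_props(3)[OF M] col_sym wx by blast
  qed
  obtain u where u: "u \<in> Ox" "col u (z M)" "col u w" using C4[OF z_props(1,3)[OF M] z_ne_x[OF M] wP nc] by blast
  obtain m where m: "m \<in> carrier G" "gp m y = u" using ev_surj[OF u(1)] by blast
  have mB: "m \<in> B M" using B_char[OF M m(1)] m u by simp
  have uP: "u \<in> Pts" "\<not> col x u" using u Ox_def by auto
  have uL: "\<not> Inc u LN" using uP LN colI by metis
  have mz: "gp m (z N) = w"
  proof -
    have a: "Inc (gp m (z N)) LN" using inc_pres[OF m(1) z_props(1)[OF N] LN(1)] LN fix_lines_x[OF m(1)] by simp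
    have b: "col u (gp m (z N))" using col_pres[OF m(1) yP z_props(1)[OF N]] col_yz[OF N] m by simp
    have "\<exists>!r. r \<in> Pts \<and> Inc r LN \<and> col u r" using gq_ax[OF uP(1) LN(1) uL] .
    then show ?thesis using a b u wP wL gp_in[OF m(1) z_props(1)[OF N]] by blast
  qed
  define n where "n = inv\<^bsub>G\<^esub> m \<otimes>\<^bsub>G\<^esub> q"
  have nG: "n \<in> carrier G" unfolding n_def using m q by simp
  have "gp n (z N) = z N"
    unfolding n_def using hom[OF G.inv_closed[OF m(1)] q z_props(1)[OF N]] mz gp_inv(1)[OF m(1) z_props(1)[OF N]]
    unfolding w_def by simp
  then have nB: "n \<in> B N" using nG unfolding B_def' by simp
  have "q = m \<otimes>\<^bsub>G\<^esub> n" unfolding n_def using G.prod_split[OF m(1) q] .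
  then show ?thesis using mB nB by blast
qed

lemma arith_s3: "s + (s + 1) * (s * s - s) = s ^ 3"
proof -
  obtain k where k: "s = Suc k" using s2 by (cases s) auto
  have d: "s * s - s = s * k" unfolding k by simp
  show ?thesis unfolding d unfolding k by (simp add: algebra_simps power3_eq_cube)
qed

lemma cover: "(\<Union>M\<in>Y. B M) = carrier G"
proof -
  obtain M0 where M0: "M0 \<in> Y" using three_lines by blast
  have eq: "(\<Union>M\<in>Y. B M) = S \<union> (\<Union>M\<in>Y. B M - S)" using S_B M0 by blast
  have fin: "\<And>M. finite (B M)" using carrier_fin unfolding B_def' by auto
  have disj: "\<forall>M\<in>Y. \<forall>N\<in>Y. M \<noteq> N \<longrightarrow> (B M - S) \<inter> (B N - S) = {}" using BB by blast
  have c1: "card (\<Union>M\<in>Y. B M - S) = (\<Sum>M\<in>Y. card (B M - S))"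
    by (rule card_UN_disjoint[OF Y_fin _ disj]) (use fin in auto)
  have c2: "\<And>M. M \<in> Y \<Longrightarrow> card (B M - S) = s * s - s"
    using card_Diff_subset[OF _ S_B] B_card cardS finite_subset[OF S_sub carrier_fin] by simp
  have finS: "finite S" using finite_subset[OF S_sub carrier_fin] .
  have "card (\<Union>M\<in>Y. B M) = card S + card (\<Union>M\<in>Y. B M - S)"
    unfolding eq by (rule card_Un_disjoint) (use finS fin Y_fin in auto)
  also have "\<dots> = s + (s + 1) * (s * s - s)" using c1 c2 cardS Y_card by simp
  also have "\<dots> = s ^ 3" by (rule arith_s3)
  finally have c: "card (\<Union>M\<in>Y. B M) = card (carrier G)" using carrier_card by simp
  have sub: "(\<Union>M\<in>Y. B M) \<subseteq> carrier G" unfolding B_def' by auto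
  show ?thesis using card_subset_eq[OF carrier_fin sub c] .
qed

lemma B_normal: assumes M: "M \<in> Y" and a: "a \<in> B M" and q: "q \<in> carrier G"
  shows "inv\<^bsub>G\<^esub> q \<otimes>\<^bsub>G\<^esub> a \<otimes>\<^bsub>G\<^esub> q \<in> B M"
proof -
  interpret G: group G by (rule grp)
  have aG: "a \<in> carrier G" using a unfolding B_def' by auto
  define c where "c = inv\<^bsub>G\<^esub> q \<otimes>\<^bsub>G\<^esub> a \<otimes>\<^bsub>G\<^esub> q"
  have cG: "c \<in> carrier G" unfolding c_def using aG q by simp
  then obtain K where K: "K \<in> Y" "c \<in> B K" using cover by blast
  show ?thesis
  proof (cases "K = M")
    case True then show ?thesis using K c_def by simp
  next
    case False
    obtain m n where mn: "m \<in> B M" "n \<in> B K" "q = m \<otimes>\<^bsub>G\<^esub> n" using B_prod[OF M K(1) _ q] False by metis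
    have mG: "m \<in> carrier G" and nG: "n \<in> carrier G" using mn unfolding B_def' by auto
    define t where "t = inv\<^bsub>G\<^esub> m \<otimes>\<^bsub>G\<^esub> a \<otimes>\<^bsub>G\<^esub> m"
    have tG: "t \<in> carrier G" unfolding t_def using mG aG by simp
    have tM: "t \<in> B M" unfolding t_def
      by (rule subgroup.m_closed[OF B_sub[OF M] subgroup.m_closed[OF B_sub[OF M] subgroup.m_inv_closed[OF B_sub[OF M] mn(1)] a] mn(1)])
    have ct: "c = inv\<^bsub>G\<^esub> n \<otimes>\<^bsub>G\<^esub> t \<otimes>\<^bsub>G\<^esub> n" unfolding c_def t_def mn(3) using G.conj_prod[OF mG nG aG] .
    have "t = n \<otimes>\<^bsub>G\<^esub> c \<otimes>\<^bsub>G\<^esub> inv\<^bsub>G\<^esub> n" unfolding ct using G.conj_cancel[OF nG tG] by simp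
    moreover have "n \<otimes>\<^bsub>G\<^esub> c \<otimes>\<^bsub>G\<^esub> inv\<^bsub>G\<^esub> n \<in> B K"
      by (rule subgroup.m_closed[OF B_sub[OF K(1)] subgroup.m_closed[OF B_sub[OF K(1)] mn(2) K(2)] subgroup.m_inv_closed[OF B_sub[OF K(1)] mn(2)]])
    ultimately have tK: "t \<in> B K" by simp
    have tS: "t \<in> S" using BB[OF M K(1)] False tM tK by blast
    have "a = m \<otimes>\<^bsub>G\<^esub> t \<otimes>\<^bsub>G\<^esub> inv\<^bsub>G\<^esub> m" unfolding t_def using G.conj_cancel[OF mG aG] by simp
    then have aS: "a \<in> S" using S_normal[OF mG tS] by simp
    have "c = inv\<^bsub>G\<^esub> q \<otimes>\<^bsub>G\<^esub> a \<otimes>\<^bsub>G\<^esub> inv\<^bsub>G\<^esub> (inv\<^bsub>G\<^esub> q)" unfolding c_def using q by simp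
    then have "c \<in> S" using S_normal[OF G.inv_closed[OF q] aS] by simp
    then show ?thesis using S_B[OF M] c_def by auto
  qed
qed

lemma comm_diff: assumes M: "M \<in> Y" and N: "N \<in> Y" and MN: "M \<noteq> N" and a: "a \<in> B M" and b: "b \<in> B N"
  shows "a \<otimes>\<^bsub>G\<^esub> b \<otimes>\<^bsub>G\<^esub> inv\<^bsub>G\<^esub> a \<otimes>\<^bsub>G\<^esub> inv\<^bsub>G\<^esub> b \<in> S"
proof -
  interpret G: group G by (rule grp)
  have aG: "a \<in> carrier G" using a unfolding B_def' by auto
  have bG: "b \<in> carrier G" using b unfolding B_def' by auto
  have "inv\<^bsub>G\<^esub> (inv\<^bsub>G\<^esub> a) \<otimes>\<^bsub>G\<^esub> b \<otimes>\<^bsub>G\<^esub> inv\<^bsub>G\<^esub> a \<in> B N" using B_normal[OF N b G.inv_closed[OF aG]] .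
  then have 1: "a \<otimes>\<^bsub>G\<^esub> b \<otimes>\<^bsub>G\<^esub> inv\<^bsub>G\<^esub> a \<otimes>\<^bsub>G\<^esub> inv\<^bsub>G\<^esub> b \<in> B N"
    unfolding G.comm_split1[OF aG bG] by (rule subgroup.m_closed[OF B_sub[OF N] _ subgroup.m_inv_closed[OF B_sub[OF N] b]])
  have "inv\<^bsub>G\<^esub> a \<in> B M" using subgroup.m_inv_closed[OF B_sub[OF M] a] .
  then have "inv\<^bsub>G\<^esub> (inv\<^bsub>G\<^esub> b) \<otimes>\<^bsub>G\<^esub> inv\<^bsub>G\<^esub> a \<otimes>\<^bsub>G\<^esub> inv\<^bsub>G\<^esub> b \<in> B M" using B_normal[OF M _ G.inv_closed[OF bG]] by blast
  then have 2: "a \<otimes>\<^bsub>G\<^esub> b \<otimes>\<^bsub>G\<^esub> inv\<^bsub>G\<^esub> a \<otimes>\<^bsub>G\<^esub> inv\<^bsub>G\<^esub> b \<in> B M"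
    unfolding G.comm_split2[OF aG bG] by (rule subgroup.m_closed[OF B_sub[OF M] a])
  show ?thesis using 1 2 BB[OF M N MN] by blast
qed

lemma comm_all: assumes g: "g \<in> carrier G" and h: "h \<in> carrier G"
  shows "g \<otimes>\<^bsub>G\<^esub> h \<otimes>\<^bsub>G\<^esub> inv\<^bsub>G\<^esub> g \<otimes>\<^bsub>G\<^esub> inv\<^bsub>G\<^esub> h \<in> S"
proof -
  interpret G: group G by (rule grp)
  obtain M where M: "M \<in> Y" "g \<in> B M" using g cover by blast
  have "card (Y - {M}) \<ge> 2" using Y_card s2 M Y_fin by (simp add: card_Diff_singleton)
  then obtain N where N: "N \<in> Y - {M}" using card_ge1_ex[of "_"] by (meson dual_order.trans one_le_numeral)
  have "card (Y - {M} - {N}) \<ge> 1" using \<open>card (Y - {M}) \<ge> 2\<close> N Y_fin by (simp add: card_Diff_singleton)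
  then obtain P where P: "P \<in> Y - {M} - {N}" using card_ge1_ex[of "_"] by (meson dual_order.trans one_le_numeral)
  obtain n p where np: "n \<in> B N" "p \<in> B P" "h = n \<otimes>\<^bsub>G\<^esub> p" using B_prod[OF _ _ _ h, of N P] N P by blast
  have nG: "n \<in> carrier G" and pG: "p \<in> carrier G" using np unfolding B_def' by auto
  have 1: "g \<otimes>\<^bsub>G\<^esub> n \<otimes>\<^bsub>G\<^esub> inv\<^bsub>G\<^esub> g \<otimes>\<^bsub>G\<^esub> inv\<^bsub>G\<^esub> n \<in> S" using comm_diff[OF M(1) _ _ M(2) np(1)] N by blast
  have 2: "g \<otimes>\<^bsub>G\<^esub> p \<otimes>\<^bsub>G\<^esub> inv\<^bsub>G\<^esub> g \<otimes>\<^bsub>G\<^esub> inv\<^bsub>G\<^esub> p \<in> S" using comm_diff[OF M(1) _ _ M(2) np(2)] P by blast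
  have 3: "n \<otimes>\<^bsub>G\<^esub> (g \<otimes>\<^bsub>G\<^esub> p \<otimes>\<^bsub>G\<^esub> inv\<^bsub>G\<^esub> g \<otimes>\<^bsub>G\<^esub> inv\<^bsub>G\<^esub> p) \<otimes>\<^bsub>G\<^esub> inv\<^bsub>G\<^esub> n \<in> S"
    using S_normal[OF nG 2] .
  show ?thesis unfolding np(3) G.comm_prod[OF g nG pG] using subgroup.m_closed[OF subS 1 3] .
qed

lemma derived_S: "derived G (carrier G) \<subseteq> S"
proof -
  interpret G: group G by (rule grp)
  have "derived_set G (carrier G) \<subseteq> S" using comm_all by blast
  then show ?thesis unfolding derived_def using G.generate_subgroup_incl[OF _ subS] by blast
qed

lemma gl_one: assumes l: "l \<in> Lns" shows "gl \<one>\<^bsub>G\<^esub> l = l"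
proof -
  interpret G: group G by (rule grp)
  have o: "\<one>\<^bsub>G\<^esub> \<in> carrier G" by simp
  have "gl \<one>\<^bsub>G\<^esub> (gl \<one>\<^bsub>G\<^esub> l) = gl \<one>\<^bsub>G\<^esub> l" using homl[OF o o l] by simp
  moreover have "inj_on (gl \<one>\<^bsub>G\<^esub>) Lns" using gl_bij[OF o] bij_betw_def by blast
  ultimately show ?thesis using gl_in[OF o l] l by (meson inj_onD)
qed

lemma one_A: "M \<in> Y \<Longrightarrow> \<one>\<^bsub>G\<^esub> \<in> fam_A G \<phi> M"
  unfolding fam_A_def Y_def' using gl_one group.is_monoid[OF G] by (auto simp: monoid.one_closed)

lemma A_S: assumes M: "M \<in> Y" shows "fam_A G \<phi> M \<inter> S = {\<one>\<^bsub>G\<^esub>}"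
proof -
  obtain N where N: "N \<in> Y" "N \<noteq> M" using other_line[OF M] by blast
  have "fam_A G \<phi> M \<inter> S \<subseteq> {\<one>\<^bsub>G\<^esub>}" using AB1[OF M N(1) N(2)[symmetric]] S_B[OF N(1)] by blast
  moreover have "\<one>\<^bsub>G\<^esub> \<in> S" using subgroup.one_closed[OF subS] .
  ultimately show ?thesis using one_A[OF M] by blast
qed

lemma conj_card: assumes g: "g \<in> carrier G"
  shows "card (conj_class G g) * card (centralizer_of G g) = s ^ 3"
proof -
  interpret G: group G by (rule grp)
  interpret A: group_action G "carrier G" "\<lambda>h. (\<lambda>k \<in> carrier G. h \<otimes>\<^bsub>G\<^esub> k \<otimes>\<^bsub>G\<^esub> inv\<^bsub>G\<^esub> h)"
    by (rule G.action_by_conjugation)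
  have o: "orbit G (\<lambda>h. (\<lambda>k \<in> carrier G. h \<otimes>\<^bsub>G\<^esub> k \<otimes>\<^bsub>G\<^esub> inv\<^bsub>G\<^esub> h)) g = conj_class G g"
    unfolding orbit_def conj_class_def using g by auto
  have st: "stabilizer G (\<lambda>h. (\<lambda>k \<in> carrier G. h \<otimes>\<^bsub>G\<^esub> k \<otimes>\<^bsub>G\<^esub> inv\<^bsub>G\<^esub> h)) g = centralizer_of G g"
    unfolding stabilizer_def centralizer_of_def using g G.conj_fix_iff by auto
  show ?thesis using A.orbit_stabilizer_theorem[OF g] o st carrier_card unfolding order_def by simp
qed

lemma main: assumes gU: "g \<in> U0 G \<phi> Pts Lns Inc x y"
  shows "chi_S G \<phi> Pts Lns Inc s x y g = chi_T G \<phi> Pts Lns Inc s x y g \<and>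
           chi_S G \<phi> Pts Lns Inc s x y g =
             (if g \<notin> derived G (carrier G) then 0
              else if g \<noteq> \<one>\<^bsub>G\<^esub> then - (real s + 1) / (2 * real s) * real (abel_index G)
              else (real s + 1) / (2 * real s) * (real s ^ 3 - real (abel_index G)))"
proof -
  interpret G: group G by (rule grp)
  define D where "D = derived G (carrier G)"
  have gS: "g \<in> S" using U0_S gU by blast
  have gG: "g \<in> carrier G" using gS S_sub by blast
  have DS: "D \<subseteq> S" unfolding D_def using derived_S .
  have Dsub: "subgroup D G" unfolding D_def using G.derived_is_subgroup by simp
  have oneD: "\<one>\<^bsub>G\<^esub> \<in> D" using subgroup.one_closed[OF Dsub] .
  define c where "c = card (centralizer_of G g)"
  define k where "k = card (conj_class G g)"
  define I where "I = abel_index G"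
  define d where "d = card D"
  have ck: "real c * real k = real s ^ 3" using conj_card[OF gG] unfolding c_def k_def
    by (metis mult.commute of_nat_mult of_nat_power)
  have Id: "real I * real d = real s ^ 3" using G.lagrange[OF Dsub] carrier_card
    unfolding I_def d_def abel_index_def D_def order_def by (metis of_nat_mult of_nat_power)
  have classS: "conj_class G g \<subseteq> S" unfolding conj_class_def using S_normal[OF _ gS] by auto
  have cosS: "g <#\<^bsub>G\<^esub> D \<subseteq> S" unfolding l_coset_def using DS gS subgroup.m_closed[OF subS] by auto
  define a0 where "a0 = (if g = \<one>\<^bsub>G\<^esub> then 1 else 0 :: nat)"
  define e where "e = (if g \<in> D then 1 else 0 :: nat)"
  have t1: "card (fam_A G \<phi> M \<inter> conj_class G g) = a0" if M: "M \<in> Y" for M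
  proof -
    have "fam_A G \<phi> M \<inter> conj_class G g = (if g = \<one>\<^bsub>G\<^esub> then {\<one>\<^bsub>G\<^esub>} else {})"
    proof -
      have "fam_A G \<phi> M \<inter> conj_class G g \<subseteq> {\<one>\<^bsub>G\<^esub>}" using A_S[OF M] classS by blast
      moreover have "(\<one>\<^bsub>G\<^esub> \<in> conj_class G g) = (g = \<one>\<^bsub>G\<^esub>)"
      proof
        assume "\<one>\<^bsub>G\<^esub> \<in> conj_class G g"
        then obtain h where h: "h \<in> carrier G" "\<one>\<^bsub>G\<^esub> = h \<otimes>\<^bsub>G\<^esub> g \<otimes>\<^bsub>G\<^esub> inv\<^bsub>G\<^esub> h"
          unfolding conj_class_def by blast
        then show "g = \<one>\<^bsub>G\<^esub>" using G.conj_one_iff[OF h(1) gG] by simp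
      next
        assume g1: "g = \<one>\<^bsub>G\<^esub>"
        have "\<one>\<^bsub>G\<^esub> = \<one>\<^bsub>G\<^esub> \<otimes>\<^bsub>G\<^esub> g \<otimes>\<^bsub>G\<^esub> inv\<^bsub>G\<^esub> \<one>\<^bsub>G\<^esub>" using g1 by simp
        then show "\<one>\<^bsub>G\<^esub> \<in> conj_class G g" unfolding conj_class_def using G.one_closed by blast
      qed
      ultimately show ?thesis using one_A[OF M] by auto
    qed
    then show ?thesis unfolding a0_def by simp
  qed
  have t2: "card (fam_Astar G \<phi> Pts Lns Inc x M \<inter> conj_class G g) = k" if M: "M \<in> Y" for M
  proof -
    have "fam_Astar G \<phi> Pts Lns Inc x M \<inter> conj_class G g = conj_class G g"
      using S_B[OF M] classS unfolding B_def by blast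
    then show ?thesis unfolding k_def by simp
  qed
  have t3: "card (fam_A G \<phi> M \<inter> (g <#\<^bsub>G\<^esub> D)) = e" if M: "M \<in> Y" for M
  proof -
    have "fam_A G \<phi> M \<inter> (g <#\<^bsub>G\<^esub> D) = (if g \<in> D then {\<one>\<^bsub>G\<^esub>} else {})"
    proof -
      have "fam_A G \<phi> M \<inter> (g <#\<^bsub>G\<^esub> D) \<subseteq> {\<one>\<^bsub>G\<^esub>}" using A_S[OF M] cosS by blast
      moreover have "(\<one>\<^bsub>G\<^esub> \<in> g <#\<^bsub>G\<^esub> D) = (g \<in> D)" using G.one_in_lcoset[OF Dsub gG] .
      ultimately show ?thesis using one_A[OF M] by auto
    qed
    then show ?thesis unfolding e_def by simp
  qed
  have t4: "card (fam_Astar G \<phi> Pts Lns Inc x M \<inter> (g <#\<^bsub>G\<^esub> D)) = d" if M: "M \<in> Y" for M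
  proof -
    have "fam_Astar G \<phi> Pts Lns Inc x M \<inter> (g <#\<^bsub>G\<^esub> D) = g <#\<^bsub>G\<^esub> D"
      using S_B[OF M] cosS unfolding B_def by blast
    then show ?thesis unfolding d_def using G.card_lcoset[OF subgroup.subset[OF Dsub] gG] by simp
  qed
  have LY: "lines_through Lns Inc y = Y" unfolding Y_def by simp
  have sumS: "chi_S G \<phi> Pts Lns Inc s x y g =
      1 / (2 * real s ^ 2) * ((real s + 1) * (real c * (real s * real a0 + real k) - real I * (real s * real e + real d)))"
    unfolding chi_S_def LY D_def[symmetric] c_def[symmetric] I_def[symmetric]
    using t1 t2 t3 t4 Y_card by simp
  have sumT: "chi_T G \<phi> Pts Lns Inc s x y g =
      1 / (2 * real s ^ 2) * ((real s + 1) * (real c * (real s * real a0 - real k) - real I * (real s * real e - real d)))"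
    unfolding chi_T_def LY D_def[symmetric] c_def[symmetric] I_def[symmetric]
    using t1 t2 t3 t4 Y_card by simp
  have sp: "real s > 0" using s2 by simp
  define TS where "TS = real c * (real s * real a0 + real k) - real I * (real s * real e + real d)"
  define TT where "TT = real c * (real s * real a0 - real k) - real I * (real s * real e - real d)"
  have TS': "TS = real c * real s * real a0 + real c * real k - real I * real s * real e - real I * real d"
    unfolding TS_def by (simp add: algebra_simps)
  have TT': "TT = real c * real s * real a0 - real c * real k - real I * real s * real e + real I * real d"
    unfolding TT_def by (simp add: algebra_simps)
  have sumS': "chi_S G \<phi> Pts Lns Inc s x y g = 1 / (2 * real s ^ 2) * ((real s + 1) * TS)"
    using sumS unfolding TS_def .
  have sumT': "chi_T G \<phi> Pts Lns Inc s x y g = 1 / (2 * real s ^ 2) * ((real s + 1) * TT)"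
    using sumT unfolding TT_def .
  show ?thesis
  proof (cases "g \<in> D")
    case False
    then have "g \<noteq> \<one>\<^bsub>G\<^esub>" using oneD by auto
    then have "a0 = 0" "e = 0" unfolding a0_def e_def using False by auto
    then have "TS = 0" "TT = 0" using TS' TT' ck Id by simp_all
    then show ?thesis using sumS' sumT' False unfolding D_def by simp
  next
    case True
    show ?thesis
    proof (cases "g = \<one>\<^bsub>G\<^esub>")
      case False
      then have "a0 = 0" "e = 1" unfolding a0_def e_def using True by auto
      then have v: "TS = - real I * real s" "TT = - real I * real s" using TS' TT' ck Id by simp_all
      have "1 / (2 * real s ^ 2) * ((real s + 1) * (- real I * real s)) = - (real s + 1) / (2 * real s) * real I"
        using sp by (simp add: field_simps power2_eq_square)
      then show ?thesis using sumS' sumT' True False v unfolding D_def I_def by simp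
    next
      case g1: True
      have "a0 = 1" "e = 1" unfolding a0_def e_def using True g1 by auto
      moreover have "centralizer_of G g = carrier G" unfolding centralizer_of_def g1 by auto
      then have "real c = real s ^ 3" unfolding c_def using carrier_card by simp
      moreover have "conj_class G g = {\<one>\<^bsub>G\<^esub>}" unfolding conj_class_def g1 using G.one_closed by force
      then have "real k = 1" unfolding k_def by simp
      ultimately have v: "TS = real s ^ 3 * real s - real I * real s" "TT = real s ^ 3 * real s - real I * real s"
        using TS' TT' Id by (simp_all add: algebra_simps)
      have "1 / (2 * real s ^ 2) * ((real s + 1) * (real s ^ 3 * real s - real I * real s)) =
            (real s + 1) / (2 * real s) * (real s ^ 3 - real I)"
        using sp by (simp add: field_simps power2_eq_square power3_eq_cube)
      then show ?thesis using sumS' sumT' True g1 v unfolding D_def I_def by simp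
    qed
  qed
qed

end

theorem corollary2p8:
  fixes Pts :: "'p set" and Lns :: "'l set" and Inc :: "'p \<Rightarrow> 'l \<Rightarrow> bool"
    and G :: "('g, 'm) monoid_scheme" and \<phi> :: "'g \<Rightarrow> ('p \<Rightarrow> 'p) \<times> ('l \<Rightarrow> 'l)"
    and s :: nat and x y :: 'p
  assumes "is_STGQ Pts Lns Inc s x G \<phi>"
    and "even s"
    and "y \<in> Pts" and "\<not> collinear Lns Inc x y"
  shows "\<forall>g\<in>U0 G \<phi> Pts Lns Inc x y.
           chi_S G \<phi> Pts Lns Inc s x y g = chi_T G \<phi> Pts Lns Inc s x y g \<and>
           chi_S G \<phi> Pts Lns Inc s x y g =
             (if g \<notin> derived G (carrier G) then 0
              else if g \<noteq> \<one>\<^bsub>G\<^esub> then - (real s + 1) / (2 * real s) * real (abel_index G)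
              else (real s + 1) / (2 * real s) * (real s ^ 3 - real (abel_index G)))"
proof (cases "s = 0")
  case True
  then show ?thesis unfolding chi_S_def chi_T_def by simp
next
  case False
  then have s2: "s \<ge> 2" using assms(2) by presburger
  have E: "is_EGQ Pts Lns Inc s x G \<phi>" using assms(1) unfolding is_STGQ_def by blast
  obtain S where S: "subgroup S G" "card S = s" "\<forall>g\<in>S. is_symmetry Pts Lns Inc x (\<phi> g)"
    using assms(1) unfolding is_STGQ_def by blast
  have Q: "finite_gq_of_order Pts Lns Inc s" and xP: "x \<in> Pts"
    and F: "faithful_aut_action G Pts Lns Inc \<phi>"
    and El: "\<forall>g\<in>carrier G. is_elation Pts Lns Inc x (\<phi> g)"
    and R: "\<forall>y\<in>Pts. \<forall>z\<in>Pts. \<not> collinear Lns Inc x y \<longrightarrow> \<not> collinear Lns Inc x z \<longrightarrow>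
        (\<exists>!g. g \<in> carrier G \<and> fst (\<phi> g) y = z)"
    using E unfolding is_EGQ_def by blast+
  interpret st: stgq Pts Lns Inc G \<phi> s x y S
  proof (rule stgq.intro)
    show "finite Pts" "finite Lns" using Q unfolding finite_gq_of_order_def by blast+
    show "\<And>l. l \<in> Lns \<Longrightarrow> card {p \<in> Pts. Inc p l} = s + 1" using Q unfolding finite_gq_of_order_def by blast
    show "\<And>p. p \<in> Pts \<Longrightarrow> card {l \<in> Lns. Inc p l} = s + 1" using Q unfolding finite_gq_of_order_def by blast
    show "\<And>p q l m. \<lbrakk>p \<in> Pts; q \<in> Pts; l \<in> Lns; m \<in> Lns; p \<noteq> q; Inc p l; Inc q l; Inc p m; Inc q m\<rbrakk> \<Longrightarrow> l = m"
      using Q unfolding finite_gq_of_order_def by blast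
    show "\<And>p l. \<lbrakk>p \<in> Pts; l \<in> Lns; \<not> Inc p l\<rbrakk> \<Longrightarrow> \<exists>!q. q \<in> Pts \<and> Inc q l \<and> collinear Lns Inc p q"
      using Q unfolding finite_gq_of_order_def by blast
    show "x \<in> Pts" by (rule xP)
    show "group G" using F unfolding faithful_aut_action_def by blast
    show "\<And>g. g \<in> carrier G \<Longrightarrow> is_automorphism Pts Lns Inc (\<phi> g)" using F unfolding faithful_aut_action_def by blast
    show "\<And>g h p. \<lbrakk>g \<in> carrier G; h \<in> carrier G; p \<in> Pts\<rbrakk> \<Longrightarrow> fst (\<phi> (g \<otimes>\<^bsub>G\<^esub> h)) p = fst (\<phi> g) (fst (\<phi> h) p)"
      using F unfolding faithful_aut_action_def by blast
    show "\<And>g h l. \<lbrakk>g \<in> carrier G; h \<in> carrier G; l \<in> Lns\<rbrakk> \<Longrightarrow> snd (\<phi> (g \<otimes>\<^bsub>G\<^esub> h)) l = snd (\<phi> g) (snd (\<phi> h) l)"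
      using F unfolding faithful_aut_action_def by blast
    show "\<And>g. g \<in> carrier G \<Longrightarrow> is_elation Pts Lns Inc x (\<phi> g)" using El by blast
    show "\<And>u v. \<lbrakk>u \<in> Pts; v \<in> Pts; \<not> collinear Lns Inc x u; \<not> collinear Lns Inc x v\<rbrakk> \<Longrightarrow> \<exists>!g. g \<in> carrier G \<and> fst (\<phi> g) u = v"
      using R by blast
    show "subgroup S G" "card S = s" using S by blast+
    show "\<And>g. g \<in> S \<Longrightarrow> is_symmetry Pts Lns Inc x (\<phi> g)" using S by blast
    show "2 \<le> s" by (rule s2)
    show "y \<in> Pts" "\<not> collinear Lns Inc x y" using assms(3,4) by blast+
  qed
  show ?thesis using st.main by blast
qed

end
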